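(* Let $R$ be an exchange ring in which $2$ is invertible, and let $a\in R$ be such that $a-a^3$ is regular. Then there is an isomorphism of right $R$-modules $(a-a^3)R\oplus r(a)\cong (a-a^3)R\oplus R/aR$.
   Context: All rings are associative with identity; modules are right modules. An element $x\in R$ is regular if $x=xyx$ for some $y\in R$. $R$ is an exchange ring if for every $x\in R$ there is an idempotent $e\in xR$ with $1-e\in(1-x)R$. $r(a)=\{x\in R: ax=0\}$. *)

theory Defs
  imports Main
begin

definition regular_elem :: "'a::ring_1 \<Rightarrow> bool" where
  "regular_elem x \<longleftrightarrow> (\<exists>y. x = x * y * x)"

definition rprinc :: "'a::ring_1 \<Rightarrow> 'a set" where
  "rprinc x = {x * r | r. True}"

definition exchange_ring :: "'a::ring_1 itself \<Rightarrow> bool" where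
  "exchange_ring _ \<longleftrightarrow>
     (\<forall>x::'a. \<exists>e. e * e = e \<and> e \<in> rprinc x \<and> 1 - e \<in> rprinc (1 - x))"

definition rann :: "'a::ring_1 \<Rightarrow> 'a set" where
  "rann a = {x. a * x = 0}"

(* the quotient module R/I for a right ideal I, as the set of cosets x + I *)
definition coset :: "'a::ring_1 set \<Rightarrow> 'a \<Rightarrow> 'a set" where
  "coset I x = {x + i | i. i \<in> I}"

definition quot :: "'a::ring_1 set \<Rightarrow> 'a set set" where
  "quot I = {coset I x | x. True}"

definition qadd :: "'a::ring_1 set \<Rightarrow> 'a set \<Rightarrow> 'a set" where
  "qadd A B = {u + v | u v. u \<in> A \<and> v \<in> B}"

definition qsmul :: "'a::ring_1 set \<Rightarrow> 'a set \<Rightarrow> 'a \<Rightarrow> 'a set" where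
  "qsmul I A r = {u * r + i | u i. u \<in> A \<and> i \<in> I}"

definition rmod_iso ::
  "'m set \<Rightarrow> ('m \<Rightarrow> 'm \<Rightarrow> 'm) \<Rightarrow> ('m \<Rightarrow> 'r \<Rightarrow> 'm) \<Rightarrow>
   'n set \<Rightarrow> ('n \<Rightarrow> 'n \<Rightarrow> 'n) \<Rightarrow> ('n \<Rightarrow> 'r \<Rightarrow> 'n) \<Rightarrow> ('m \<Rightarrow> 'n) \<Rightarrow> bool" where
  "rmod_iso M addM smulM N addN smulN f \<longleftrightarrow>
     bij_betw f M N \<and>
     (\<forall>x\<in>M. \<forall>y\<in>M. f (addM x y) = addN (f x) (f y)) \<and>
     (\<forall>x\<in>M. \<forall>r. f (smulM x r) = smulN (f x) r)"

definition rmod_isomorphic ::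
  "'m set \<Rightarrow> ('m \<Rightarrow> 'm \<Rightarrow> 'm) \<Rightarrow> ('m \<Rightarrow> 'r \<Rightarrow> 'm) \<Rightarrow>
   'n set \<Rightarrow> ('n \<Rightarrow> 'n \<Rightarrow> 'n) \<Rightarrow> ('n \<Rightarrow> 'r \<Rightarrow> 'n) \<Rightarrow> bool" where
  "rmod_isomorphic M addM smulM N addN smulN \<longleftrightarrow> (\<exists>f. rmod_iso M addM smulM N addN smulN f)"

end

theory Submission
  imports Defs
begin

lemma coset_eq_iff:
  fixes a :: "'a::ring_1"
  shows "coset (rprinc a) x = coset (rprinc a) z \<longleftrightarrow> x - z \<in> rprinc a"
proof
  assume h: "coset (rprinc a) x = coset (rprinc a) z"
  have "x \<in> coset (rprinc a) x" unfolding coset_def rprinc_def by (auto intro: exI[of _ 0])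
  then have "x \<in> coset (rprinc a) z" using h by simp
  then obtain r where "x = z + a * r" unfolding coset_def rprinc_def by auto
  then show "x - z \<in> rprinc a" unfolding rprinc_def by auto
next
  assume "x - z \<in> rprinc a"
  then obtain r where r: "x - z = a * r" unfolding rprinc_def by auto
  show "coset (rprinc a) x = coset (rprinc a) z"
  proof (rule set_eqI)
    fix t
    show "t \<in> coset (rprinc a) x \<longleftrightarrow> t \<in> coset (rprinc a) z"
    proof
      assume "t \<in> coset (rprinc a) x"
      then obtain s where "t = x + a * s" unfolding coset_def rprinc_def by auto
      then have "t = z + a * (r + s)" using r by (simp add: algebra_simps eq_diff_eq)
      then show "t \<in> coset (rprinc a) z" unfolding coset_def rprinc_def by auto
    next
      assume "t \<in> coset (rprinc a) z"
      then obtain s where "t = z + a * s" unfolding coset_def rprinc_def by auto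
      then have "t = x + a * (s - r)" using r by (simp add: algebra_simps eq_diff_eq)
      then show "t \<in> coset (rprinc a) x" unfolding coset_def rprinc_def by auto
    qed
  qed
qed

lemma qadd_coset:
  fixes a :: "'a::ring_1"
  shows "qadd (coset (rprinc a) x) (coset (rprinc a) z) = coset (rprinc a) (x + z)"
proof (rule set_eqI)
  fix t
  show "t \<in> qadd (coset (rprinc a) x) (coset (rprinc a) z) \<longleftrightarrow> t \<in> coset (rprinc a) (x + z)"
  proof
    assume "t \<in> qadd (coset (rprinc a) x) (coset (rprinc a) z)"
    then obtain r s where "t = (x + a*r) + (z + a*s)" unfolding qadd_def coset_def rprinc_def by auto
    then have "t = (x + z) + a * (r + s)" by (simp add: algebra_simps)
    then show "t \<in> coset (rprinc a) (x + z)" unfolding coset_def rprinc_def by auto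
  next
    assume "t \<in> coset (rprinc a) (x + z)"
    then obtain r where "t = (x + z) + a * r" unfolding coset_def rprinc_def by auto
    then have "t = (x + a * r) + (z + a * 0)" by (simp add: algebra_simps)
    then show "t \<in> qadd (coset (rprinc a) x) (coset (rprinc a) z)"
      unfolding qadd_def coset_def rprinc_def by blast
  qed
qed

lemma qsmul_coset:
  fixes a :: "'a::ring_1"
  shows "qsmul (rprinc a) (coset (rprinc a) x) r = coset (rprinc a) (x * r)"
proof (rule set_eqI)
  fix t
  show "t \<in> qsmul (rprinc a) (coset (rprinc a) x) r \<longleftrightarrow> t \<in> coset (rprinc a) (x * r)"
  proof
    assume "t \<in> qsmul (rprinc a) (coset (rprinc a) x) r"
    then obtain p s where "t = (x + a*p) * r + a * s" unfolding qsmul_def coset_def rprinc_def by auto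
    then have "t = x * r + a * (p * r + s)" by (simp add: algebra_simps)
    then show "t \<in> coset (rprinc a) (x * r)" unfolding coset_def rprinc_def by auto
  next
    assume "t \<in> coset (rprinc a) (x * r)"
    then obtain s where "t = x * r + a * s" unfolding coset_def rprinc_def by auto
    then have "t = (x + a * 0) * r + a * s" by (simp add: algebra_simps)
    then show "t \<in> qsmul (rprinc a) (coset (rprinc a) x) r"
      unfolding qsmul_def coset_def rprinc_def by blast
  qed
qed

theorem lemma2p2:
  fixes a :: "'a::ring_1"
  assumes "exchange_ring TYPE('a)"
    and "\<exists>u::'a. 2 * u = 1 \<and> u * 2 = 1"
    and "regular_elem (a - a ^ 3)"
  shows "rmod_isomorphic
           (rprinc (a - a ^ 3) \<times> rann a)
           (\<lambda>(x, y) (x', y'). (x + x', y + y'))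
           (\<lambda>(x, y) r. (x * r, y * r))
           (rprinc (a - a ^ 3) \<times> quot (rprinc a))
           (\<lambda>(x, A) (x', A'). (x + x', qadd A A'))
           (\<lambda>(x, A) r. (x * r, qsmul (rprinc a) A r))"
proof -
  define w where "w = a - a ^ 3"
  define P where "P = 1 - a * a"
  obtain y where wyw: "w * y * w = w" using assms(3) unfolding regular_elem_def w_def by metis
  have aP: "a * P = w" "P * a = w"
    by (simp_all add: w_def P_def algebra_simps power3_eq_cube)
  have wR: "w * y * u = u" if uw: "u \<in> rprinc w" for u
  proof -
    obtain t where "u = w * t" using uw unfolding rprinc_def by auto
    then show ?thesis using wyw by (metis mult.assoc)
  qed
  have Pr: "P * x = x" if "x \<in> rann a" for x
  proof -
    have "a * x = 0" using that unfolding rann_def by auto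
    then have "a * (a * x) = 0" by simp
    then show ?thesis unfolding P_def by (simp add: algebra_simps)
  qed
  have wsub: "z \<in> rprinc a" if zw: "z \<in> rprinc w" for z
  proof -
    obtain t where "z = w * t" using zw unfolding rprinc_def by auto
    then have "z = a * (P * t)" using aP by (simp add: mult.assoc[symmetric])
    then show ?thesis unfolding rprinc_def by auto
  qed
  have PaR: "d \<in> rprinc w" if "d = P * c" "d = a * s" for d c s
  proof -
    have "d = P * d + a * (a * d)" unfolding P_def by (simp add: algebra_simps)
    also have "P * d = w * s" using that aP by (metis mult.assoc)
    also have "a * (a * d) = w * (a * c)"
    proof -
      have "a * (a * d) = a * a * P * c" using that by (simp add: mult.assoc)
      also have "... = a * (P * a) * c" using aP by (metis mult.assoc)
      also have "... = (a * P) * a * c" by (simp add: mult.assoc)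
      also have "... = w * (a * c)" using aP by (simp add: mult.assoc)
      finally show ?thesis .
    qed
    finally have "d = w * (s + a * c)" by (simp add: distrib_left)
    then show ?thesis unfolding rprinc_def by auto
  qed
  define I where "I = rprinc a"
  define g where "g = (\<lambda>u x. x + P * y * u)"
  define f where "f = (\<lambda>(u, x). (w * y * g u x, coset I (g u x)))"
  let ?M = "rprinc w \<times> rann a"
  let ?N = "rprinc w \<times> quot I"
  have gP: "g u x = P * (x + y * u)" if "x \<in> rann a" for u x
    using Pr[OF that] unfolding g_def by (simp add: distrib_left mult.assoc)
  have inj: "inj_on f ?M"
  proof (rule inj_onI)
    fix p q assume p: "p \<in> ?M" and q: "q \<in> ?M" and fe: "f p = f q"
    obtain u x where pe: "p = (u, x)" by (cases p)
    obtain u' x' where qe: "q = (u', x')" by (cases q)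
    have u: "u \<in> rprinc w" "x \<in> rann a" using p pe by auto
    have u': "u' \<in> rprinc w" "x' \<in> rann a" using q qe by auto
    have e1: "w * y * g u x = w * y * g u' x'" and e2: "coset I (g u x) = coset I (g u' x')"
      using fe pe qe unfolding f_def by auto
    define d where "d = g u x - g u' x'"
    have "d \<in> rprinc a" using e2 coset_eq_iff unfolding d_def I_def by blast
    then obtain s where ds: "d = a * s" unfolding rprinc_def by auto
    have dP: "d = P * ((x + y * u) - (x' + y * u'))"
      unfolding d_def using gP[OF u(2)] gP[OF u'(2)] by (simp add: right_diff_distrib)
    have "d \<in> rprinc w" using PaR[OF dP ds] .
    then have "w * y * d = d" using wR by blast
    moreover have "w * y * d = 0" using e1 unfolding d_def by (simp add: right_diff_distrib)
    ultimately have d0: "d = 0" by simp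
    then have gg: "g u x = g u' x'" unfolding d_def by simp
    have au: "a * g u x = u" if "u \<in> rprinc w" "x \<in> rann a" for u x
    proof -
      have "a * g u x = a * x + (a * P) * y * u" unfolding g_def by (simp add: distrib_left mult.assoc)
      also have "... = u" using that wR aP unfolding rann_def by simp
      finally show ?thesis .
    qed
    have "u = u'" using au[OF u] au[OF u'] gg by simp
    then have "x = x'" using gg unfolding g_def by simp
    then show "p = q" using pe qe \<open>u = u'\<close> by simp
  qed
  have img: "f ` ?M = ?N"
  proof
    show "f ` ?M \<subseteq> ?N"
    proof
      fix z assume "z \<in> f ` ?M"
      then obtain u x where "z = f (u, x)" by auto
      then show "z \<in> ?N" unfolding f_def quot_def rprinc_def by (auto simp: mult.assoc)
    qed
  next
    show "?N \<subseteq> f ` ?M"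
    proof
      fix pr assume pr: "pr \<in> ?N"
      obtain v A where pe: "pr = (v, A)" by (cases pr)
      have v: "v \<in> rprinc w" using pr pe by auto
      obtain c where A: "A = coset I c" using pr pe unfolding quot_def by auto
      obtain t where vt: "v = w * t" using v unfolding rprinc_def by auto
      define z where "z = P * c - w * y * (P * c) + v"
      have zP: "z = P * (c - a * y * (P * c) + a * t)"
        unfolding z_def vt using aP by (simp add: right_diff_distrib distrib_left mult.assoc[symmetric])
      have az: "a * z = w * (c - a * y * (P * c) + a * t)"
        unfolding zP using aP by (simp add: mult.assoc[symmetric])
      define u where "u = a * z"
      define x where "x = z - P * y * u"
      have uR: "u \<in> rprinc w" unfolding u_def az rprinc_def by auto
      have "a * x = u - (a * P) * y * u" unfolding x_def u_def by (simp add: right_diff_distrib mult.assoc)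
      also have "... = 0" using aP wR[OF uR] by simp
      finally have xR: "x \<in> rann a" unfolding rann_def by simp
      have gz: "g u x = z" unfolding g_def x_def by simp
      have ez: "w * y * z = v"
      proof -
        have "w * y * z = w * y * (P * c) - (w * y * w) * y * (P * c) + w * y * v"
          unfolding z_def by (simp add: algebra_simps mult.assoc)
        also have "... = v" using wyw wR[OF v] by simp
        finally show ?thesis .
      qed
      have "z - c \<in> rprinc a"
      proof -
        have "z - c = a * (- (a * c) - P * y * (P * c) + P * t)"
          unfolding z_def vt P_def w_def power3_eq_cube by (simp add: algebra_simps)
        then show ?thesis unfolding rprinc_def by auto
      qed
      then have cz: "coset I z = coset I c" unfolding I_def using coset_eq_iff by blast
      have "f (u, x) = pr" unfolding f_def pe using gz ez cz A by simp
      moreover have "(u, x) \<in> ?M" using uR xR by simp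
      ultimately show "pr \<in> f ` ?M" by force
    qed
  qed
  have add: "f ((\<lambda>(x, y) (x', y'). (x + x', y + y')) p q)
           = (\<lambda>(x, A) (x', A'). (x + x', qadd A A')) (f p) (f q)" for p q
  proof -
    obtain u x where pe: "p = (u, x)" by (cases p)
    obtain u' x' where qe: "q = (u', x')" by (cases q)
    have "g (u + u') (x + x') = g u x + g u' x'" unfolding g_def by (simp add: algebra_simps)
    then show ?thesis unfolding pe qe f_def I_def using qadd_coset[of a]
      by (simp add: distrib_left)
  qed
  have smul: "f ((\<lambda>(x, y) r. (x * r, y * r)) p r)
           = (\<lambda>(x, A) r. (x * r, qsmul (rprinc a) A r)) (f p) r" for p r
  proof -
    obtain u x where pe: "p = (u, x)" by (cases p)
    have "g (u * r) (x * r) = g u x * r" unfolding g_def by (simp add: algebra_simps)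
    then show ?thesis unfolding pe f_def I_def using qsmul_coset[of a]
      by (simp add: mult.assoc)
  qed
  show ?thesis unfolding rmod_isomorphic_def rmod_iso_def w_def[symmetric] I_def[symmetric]
    apply (rule exI[of _ f])
    using inj img add smul unfolding bij_betw_def I_def by blast
qed

end
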